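(* Let $E\subset\mathbb{R}^2$, $E_o:=\{(x,y)\in E:x\neq y\}$, and let $C\subseteq E_o$ be connected in $E_o$. If $C$ contains an identifying cycle, then uniqueness and convergence of portfolio positions hold at every point of $C$.
   Context: A semistatic strategy on $E$ is a function $v:E\to\mathbb{R}$ for which there exist $h,g:\mathbb{R}\to\mathbb{R}$ with $v(x,y)=h(x)(y-x)+g(y)$ for all $(x,y)\in E$; such $(h,g)$ is a portfolio position of $v$. A path in $E_o$ from $(x,y)\in E_o$ to $(x',y')\in E_o$ is a tuple $(x_i,y_i)_{i=1}^k\in E_o^k$, $k\in\mathbb{N}_0$, such that all points $(x,y),(x_1,y),(x_1,y_1),(x_2,y_1),\dots,(x_k,y_k),(x',y_k),(x',y')$ belong to $E_o$. Two points of $E_o$ are connected if there is a path between them; $C\subseteq E_o$ is connected if any two of its points are connected. A cycle is a path from a point to itself; a cycle $(x_i,y_i)_{i=1}^k$ is identifying if $\prod_{i=1}^k(y_i-x_i)-\prod_{i=1}^k(y_i-x_{i+1})\neq0$ with $x_{k+1}:=x_1$; $C$ contains the cycle if all its points lie in $C$. Uniqueness of portfolio positions holds at $(x,y)\in E$ if for every semistatic strategy $v$ on $E$, the values $h(x)$ and $g(y)$ are the same for all portfolio positions $(h,g)$ of $v$. In that situation, convergence of portfolio positions holds at $(x,y)$ if for any semistatic strategies $v_n$ on $E$ converging pointwise on $E$, with portfolio positions $(h_n,g_n)$, the sequences $h_n(x)$ and $g_n(y)$ converge. *)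

theory Defs
  imports Complex_Main
begin

type_synonym point = "real \<times> real"

definition Eo :: "point set \<Rightarrow> point set" where
  "Eo E = {p \<in> E. fst p \<noteq> snd p}"

definition portfolio_position ::
  "point set \<Rightarrow> (point \<Rightarrow> real) \<Rightarrow> (real \<Rightarrow> real) \<Rightarrow> (real \<Rightarrow> real) \<Rightarrow> bool" where
  "portfolio_position E v h g \<longleftrightarrow>
     (\<forall>(x, y) \<in> E. v (x, y) = h x * (y - x) + g y)"

definition semistatic :: "point set \<Rightarrow> (point \<Rightarrow> real) \<Rightarrow> bool" where
  "semistatic E v \<longleftrightarrow> (\<exists>h g. portfolio_position E v h g)"

definition is_path :: "point set \<Rightarrow> point \<Rightarrow> point list \<Rightarrow> point \<Rightarrow> bool" where
  "is_path E p ps q \<longleftrightarrow>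
     (let xs = fst p # map fst ps @ [fst q]; ys = snd p # map snd ps @ [snd q] in
       (\<forall>i \<le> length ps + 1. (xs ! i, ys ! i) \<in> Eo E) \<and>
       (\<forall>i \<le> length ps. (xs ! (i + 1), ys ! i) \<in> Eo E))"

definition connected_pts :: "point set \<Rightarrow> point \<Rightarrow> point \<Rightarrow> bool" where
  "connected_pts E p q \<longleftrightarrow> (\<exists>ps. is_path E p ps q)"

definition connected_in_Eo :: "point set \<Rightarrow> point set \<Rightarrow> bool" where
  "connected_in_Eo E C \<longleftrightarrow> C \<subseteq> Eo E \<and> (\<forall>p\<in>C. \<forall>q\<in>C. connected_pts E p q)"

definition is_cycle :: "point set \<Rightarrow> point list \<Rightarrow> bool" where
  "is_cycle E ps \<longleftrightarrow> ps \<noteq> [] \<and> is_path E (hd ps) ps (hd ps)"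

definition identifying :: "point list \<Rightarrow> bool" where
  "identifying ps \<longleftrightarrow>
     (let k = length ps; xs = map fst ps; ys = map snd ps in
       (\<Prod>i<k. ys ! i - xs ! i) - (\<Prod>i<k. ys ! i - xs ! ((i + 1) mod k)) \<noteq> 0)"

definition contains_cycle :: "point set \<Rightarrow> point set \<Rightarrow> point list \<Rightarrow> bool" where
  "contains_cycle E C ps \<longleftrightarrow> is_cycle E ps \<and> set ps \<subseteq> C"

definition uniqueness_at :: "point set \<Rightarrow> point \<Rightarrow> bool" where
  "uniqueness_at E p \<longleftrightarrow>
     (\<forall>v. semistatic E v \<longrightarrow>
        (\<forall>h g h' g'. portfolio_position E v h g \<longrightarrow> portfolio_position E v h' g' \<longrightarrow>
            h (fst p) = h' (fst p) \<and> g (snd p) = g' (snd p)))"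

definition convergence_at :: "point set \<Rightarrow> point \<Rightarrow> bool" where
  "convergence_at E p \<longleftrightarrow>
     (\<forall>(v :: nat \<Rightarrow> point \<Rightarrow> real) h g.
        (\<forall>n. semistatic E (v n) \<and> portfolio_position E (v n) (h n) (g n)) \<longrightarrow>
        (\<forall>q\<in>E. convergent (\<lambda>n. v n q)) \<longrightarrow>
        convergent (\<lambda>n. h n (fst p)) \<and> convergent (\<lambda>n. g n (snd p)))"

end

theory Submission
  imports Defs
begin

inductive lin :: "point set \<Rightarrow> ((point \<Rightarrow> real) \<Rightarrow> real) \<Rightarrow> bool" for E where
  zero: "lin E (\<lambda>v. 0)"
| ev: "q \<in> E \<Longrightarrow> lin E (\<lambda>v. v q)"
| add: "lin E F \<Longrightarrow> lin E G \<Longrightarrow> lin E (\<lambda>v. F v + G v)"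
| smul: "lin E F \<Longrightarrow> lin E (\<lambda>v. c * F v)"

lemma lin_conv:
  assumes "lin E F" "\<forall>q\<in>E. convergent (\<lambda>n. (v::nat \<Rightarrow> point \<Rightarrow> real) n q)"
  shows "convergent (\<lambda>n. F (v n))"
  using assms(1)
proof induction
  case zero
  then show ?case by (rule convergent_const)
next
  case (ev q)
  then show ?case using assms(2) by auto
next
  case (add F G)
  then show ?case using convergent_add by blast
next
  case (smul F c)
  then obtain L where "(\<lambda>n. F (v n)) \<longlonglongrightarrow> L" unfolding convergent_def by auto
  then have "(\<lambda>n. c * F (v n)) \<longlonglongrightarrow> c * L" by (rule tendsto_mult_left)
  then show ?case unfolding convergent_def by auto
qed

lemma pp_eq: "portfolio_position E v h g \<Longrightarrow> (x,y) \<in> E \<Longrightarrow> v (x,y) = h x * (y - x) + g y"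
  unfolding portfolio_position_def by auto

definition hdet :: "point set \<Rightarrow> real \<Rightarrow> bool" where
  "hdet E a \<longleftrightarrow> (\<exists>F. lin E F \<and> (\<forall>v h g. portfolio_position E v h g \<longrightarrow> h a = F v))"

definition gdet :: "point set \<Rightarrow> real \<Rightarrow> bool" where
  "gdet E b \<longleftrightarrow> (\<exists>F. lin E F \<and> (\<forall>v h g. portfolio_position E v h g \<longrightarrow> g b = F v))"

lemma g_to_h:
  assumes "(a,b) \<in> E" "a \<noteq> b" "gdet E b"
  shows "hdet E a"
proof -
  obtain F where F: "lin E F" "\<forall>v h g. portfolio_position E v h g \<longrightarrow> g b = F v"
    using assms(3) unfolding gdet_def by auto
  let ?G = "\<lambda>v. (1/(b-a)) * (v (a,b) + (-1) * F v)"
  have "lin E ?G" by (intro lin.intros F assms(1))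
  moreover have "h a = ?G v" if "portfolio_position E v h g" for v h g
  proof -
    have "v (a,b) = h a * (b - a) + g b" using pp_eq[OF that assms(1)] .
    moreover have "g b = F v" using F that by auto
    ultimately show ?thesis using assms(2) by (simp add: field_simps)
  qed
  ultimately show ?thesis unfolding hdet_def by blast
qed

lemma h_to_g:
  assumes "(a,b) \<in> E" "hdet E a"
  shows "gdet E b"
proof -
  obtain F where F: "lin E F" "\<forall>v h g. portfolio_position E v h g \<longrightarrow> h a = F v"
    using assms(2) unfolding hdet_def by auto
  let ?G = "\<lambda>v. v (a,b) + (-(b-a)) * F v"
  have "lin E ?G" by (intro lin.intros F assms(1))
  moreover have "g b = ?G v" if "portfolio_position E v h g" for v h g
  proof -
    have "v (a,b) = h a * (b - a) + g b" using pp_eq[OF that assms(1)] .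
    moreover have "h a = F v" using F that by auto
    ultimately show ?thesis by (simp add: field_simps)
  qed
  ultimately show ?thesis unfolding gdet_def by blast
qed

lemma Eo_D: "(a,b) \<in> Eo E \<Longrightarrow> (a,b) \<in> E \<and> a \<noteq> b"
  unfolding Eo_def by auto

lemma path_det:
  assumes "is_path E p ps q" "hdet E (fst p)"
  shows "hdet E (fst q) \<and> gdet E (snd q)"
proof -
  define xs where "xs = fst p # map fst ps @ [fst q]"
  define ys where "ys = snd p # map snd ps @ [snd q]"
  have A: "\<forall>i\<le>length ps + 1. (xs ! i, ys ! i) \<in> Eo E"
    and B: "\<forall>i\<le>length ps. (xs ! (i + 1), ys ! i) \<in> Eo E"
    using assms(1) unfolding is_path_def xs_def ys_def Let_def by auto
  have "\<forall>i. i \<le> length ps + 1 \<longrightarrow> hdet E (xs ! i)"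
  proof
    fix i show "i \<le> length ps + 1 \<longrightarrow> hdet E (xs ! i)"
    proof (induction i)
      case 0
      then show ?case using assms(2) by (simp add: xs_def)
    next
      case (Suc i)
      show ?case
      proof
        assume "Suc i \<le> length ps + 1"
        then have i: "i \<le> length ps" by simp
        then have "hdet E (xs ! i)" using Suc by simp
        moreover have "(xs ! i, ys ! i) \<in> E" using A i Eo_D by auto
        ultimately have "gdet E (ys ! i)" by (rule h_to_g[rotated])
        moreover have "(xs ! (i+1), ys ! i) \<in> E" "xs ! (i+1) \<noteq> ys ! i" using B i Eo_D by auto
        ultimately show "hdet E (xs ! Suc i)" using g_to_h by auto
      qed
    qed
  qed
  then have "hdet E (xs ! (length ps + 1))" by simp
  moreover have "xs ! (length ps + 1) = fst q" "ys ! (length ps + 1) = snd q"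
    by (simp_all add: xs_def ys_def nth_append)
  moreover have "(xs ! (length ps + 1), ys ! (length ps + 1)) \<in> E" using A Eo_D by auto
  ultimately show ?thesis using h_to_g by (metis)
qed

lemma cycle_det:
  assumes "is_cycle E ps" "identifying ps"
  shows "hdet E (fst (hd ps))"
proof -
  define k where "k = length ps"
  define X where "X i = fst (ps ! i)" for i
  define Y where "Y i = snd (ps ! i)" for i
  have ne: "ps \<noteq> []" and P: "is_path E (hd ps) ps (hd ps)" using assms(1) unfolding is_cycle_def by auto
  have kpos: "k > 0" using ne k_def by auto
  have hd: "hd ps = (X 0, Y 0)" using ne by (simp add: X_def Y_def hd_conv_nth)
  define xs where "xs = fst (hd ps) # map fst ps @ [fst (hd ps)]"
  define ys where "ys = snd (hd ps) # map snd ps @ [snd (hd ps)]"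
  have A: "\<forall>i\<le>length ps + 1. (xs ! i, ys ! i) \<in> Eo E"
    and B: "\<forall>i\<le>length ps. (xs ! (i + 1), ys ! i) \<in> Eo E"
    using P unfolding is_path_def xs_def ys_def Let_def by auto
  have xsS: "xs ! Suc i = X (i mod k)" if "i \<le> k" for i
  proof (cases "i < k")
    case True then show ?thesis by (simp add: xs_def nth_append X_def k_def)
  next
    case False then have "i = k" using that by simp
    then show ?thesis using hd by (simp add: xs_def nth_append k_def)
  qed
  have ysS: "ys ! Suc i = Y (i mod k)" if "i \<le> k" for i
  proof (cases "i < k")
    case True then show ?thesis by (simp add: ys_def nth_append Y_def k_def)
  next
    case False then have "i = k" using that by simp
    then show ?thesis using hd by (simp add: ys_def nth_append k_def)
  qed
  have pts: "(X j, Y j) \<in> E" if "j < k" for j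
  proof -
    have "(xs ! Suc j, ys ! Suc j) \<in> Eo E" using A that k_def by auto
    then show ?thesis using xsS ysS that Eo_D by auto
  qed
  have nxt: "(X ((j+1) mod k), Y j) \<in> E \<and> X ((j+1) mod k) \<noteq> Y j" if "j < k" for j
  proof -
    have "(xs ! (Suc j + 1), ys ! Suc j) \<in> Eo E" using B that k_def by auto
    moreover have "xs ! (Suc j + 1) = X ((j+1) mod k)" using xsS[of "Suc j"] that by simp
    moreover have "ys ! Suc j = Y j" using ysS[of j] that by simp
    ultimately show ?thesis using Eo_D by auto
  qed
  define Af where "Af j = Y j - X j" for j
  define Bf where "Bf j = Y j - X ((j+1) mod k)" for j
  have claim: "m \<le> k \<Longrightarrow> \<exists>F. lin E F \<and> (\<forall>v h g. portfolio_position E v h g \<longrightarrow>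
      h (X (m mod k)) * (\<Prod>j<m. Bf j) = h (X 0) * (\<Prod>j<m. Af j) + F v)" for m
  proof (induction m)
    case 0
    show ?case by (intro exI[of _ "\<lambda>v. 0"]) (simp add: lin.zero)
  next
    case (Suc m)
    then have mk: "m < k" by simp
    then obtain F where F: "lin E F" "\<forall>v h g. portfolio_position E v h g \<longrightarrow>
      h (X (m mod k)) * (\<Prod>j<m. Bf j) = h (X 0) * (\<Prod>j<m. Af j) + F v" using Suc by auto
    define PB where "PB = (\<Prod>j<m. Bf j)"
    define PA where "PA = (\<Prod>j<m. Af j)"
    define m' where "m' = (m + 1) mod k"
    let ?G = "\<lambda>v. Af m * F v + (- PB) * (v (X m, Y m) + (-1) * v (X m', Y m))"
    have "lin E ?G"
      using pts[OF mk] nxt[OF mk] by (intro lin.intros F) (auto simp: m'_def)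
    moreover have "h (X (Suc m mod k)) * (\<Prod>j<Suc m. Bf j) = h (X 0) * (\<Prod>j<Suc m. Af j) + ?G v"
      if pp: "portfolio_position E v h g" for v h g
    proof -
      have e1: "v (X m, Y m) = h (X m) * (Y m - X m) + g (Y m)" using pp_eq[OF pp pts[OF mk]] .
      have e2: "v (X m', Y m) = h (X m') * (Y m - X m') + g (Y m)"
        using pp_eq[OF pp] nxt[OF mk] by (simp add: m'_def)
      have IH: "h (X m) * PB = h (X 0) * PA + F v" using F(2)[rule_format, OF pp] mk by (simp add: PA_def PB_def)
      have id: "h (X m') * (PB * Bf m) - (h (X 0) * (PA * Af m) + ?G v)
        = PB * (h (X m') * Bf m + v (X m, Y m) - v (X m', Y m) - h (X m) * Af m)
          - Af m * (h (X 0) * PA + F v - h (X m) * PB)"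
        by (simp add: algebra_simps)
      have z1: "h (X m') * Bf m + v (X m, Y m) - v (X m', Y m) - h (X m) * Af m = 0"
        unfolding e1 e2 Af_def Bf_def m'_def[symmetric] by (simp add: algebra_simps)
      have z2: "h (X 0) * PA + F v - h (X m) * PB = 0" using IH by simp
      have "h (X m') * (PB * Bf m) = h (X 0) * (PA * Af m) + ?G v"
        using id z1 z2 by simp
      then show ?thesis by (simp add: PA_def PB_def m'_def)
    qed
    ultimately show ?case by blast
  qed
  obtain F where F: "lin E F" "\<forall>v h g. portfolio_position E v h g \<longrightarrow>
      h (X 0) * (\<Prod>j<k. Bf j) = h (X 0) * (\<Prod>j<k. Af j) + F v"
    using claim[of k] by auto
  have p1: "(\<Prod>i<k. map snd ps ! i - map fst ps ! i) = (\<Prod>j<k. Af j)"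
    by (rule prod.cong) (auto simp: Af_def X_def Y_def k_def)
  have p2: "(\<Prod>i<k. map snd ps ! i - map fst ps ! ((i + 1) mod k)) = (\<Prod>j<k. Bf j)"
    using kpos by (intro prod.cong) (auto simp: Bf_def X_def Y_def k_def)
  have D: "(\<Prod>j<k. Af j) - (\<Prod>j<k. Bf j) \<noteq> 0"
    using assms(2) p1 p2 unfolding identifying_def Let_def k_def by simp
  let ?G = "\<lambda>v. (-1 / ((\<Prod>j<k. Af j) - (\<Prod>j<k. Bf j))) * F v"
  have "lin E ?G" by (intro lin.intros F)
  moreover have "h (X 0) = ?G v" if "portfolio_position E v h g" for v h g
  proof -
    have "h (X 0) * (\<Prod>j<k. Bf j) = h (X 0) * (\<Prod>j<k. Af j) + F v" using F that by auto
    then have "h (X 0) * ((\<Prod>j<k. Af j) - (\<Prod>j<k. Bf j)) = - F v" by (simp add: algebra_simps)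
    then show ?thesis using D by (simp add: field_simps)
  qed
  ultimately show ?thesis unfolding hdet_def hd by auto
qed

theorem corollary2p7:
  fixes E C :: "(real \<times> real) set"
  assumes "connected_in_Eo E C"
    and "\<exists>ps. contains_cycle E C ps \<and> identifying ps"
  shows "\<forall>p\<in>C. uniqueness_at E p \<and> convergence_at E p"
proof
  fix p assume pC: "p \<in> C"
  obtain ps where ps: "contains_cycle E C ps" "identifying ps" using assms(2) by auto
  have cyc: "is_cycle E ps" and sub: "set ps \<subseteq> C" using ps(1) unfolding contains_cycle_def by auto
  have "ps \<noteq> []" using cyc unfolding is_cycle_def by auto
  then have hdC: "hd ps \<in> C" using sub hd_in_set by auto
  have h0: "hdet E (fst (hd ps))" using cycle_det[OF cyc ps(2)] .
  obtain qs where "is_path E (hd ps) qs p"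
    using assms(1) hdC pC unfolding connected_in_Eo_def connected_pts_def by blast
  from path_det[OF this h0] have hp: "hdet E (fst p)" and gp: "gdet E (snd p)" by auto
  obtain F where F: "lin E F" "\<forall>v h g. portfolio_position E v h g \<longrightarrow> h (fst p) = F v"
    using hp unfolding hdet_def by auto
  obtain G where G: "lin E G" "\<forall>v h g. portfolio_position E v h g \<longrightarrow> g (snd p) = G v"
    using gp unfolding gdet_def by auto
  have "uniqueness_at E p"
    unfolding uniqueness_at_def using F G by metis
  moreover have "convergence_at E p"
    unfolding convergence_at_def
  proof (intro allI impI)
    fix v :: "nat \<Rightarrow> point \<Rightarrow> real" and h g
    assume a1: "\<forall>n. semistatic E (v n) \<and> portfolio_position E (v n) (h n) (g n)"
      and a2: "\<forall>q\<in>E. convergent (\<lambda>n. v n q)"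
    have "(\<lambda>n. h n (fst p)) = (\<lambda>n. F (v n))" using F(2) a1 by blast
    moreover have "(\<lambda>n. g n (snd p)) = (\<lambda>n. G (v n))" using G(2) a1 by blast
    ultimately show "convergent (\<lambda>n. h n (fst p)) \<and> convergent (\<lambda>n. g n (snd p))"
      using lin_conv[OF F(1) a2] lin_conv[OF G(1) a2] by simp
  qed
  ultimately show "uniqueness_at E p \<and> convergence_at E p" by simp
qed

end
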